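(* $\widetilde{S}_{AB}$ is a down-complete Inf semi-lattice, and for every family $\{U_i\;\vert\; i\in I\}$ of subsets of $\mathfrak{S}_A\times\mathfrak{S}_B$, $$\inf^{\widetilde{S}_{AB}}_{i\in I}\Omega(U_i)=\Omega\Big(\bigcup_{i\in I}U_i\Big).$$
   Context: $\mathfrak{B}=\{\mathbf{Y},\mathbf{N},\bot\}$ with meet $\wedge$ and commutative product $\bullet$ ($x\bullet\mathbf{Y}=x$, $x\bullet\mathbf{N}=\mathbf{N}$, $\bot\bullet\bot=\bot$). $(\mathfrak{S}_A,\mathfrak{E}_A,\epsilon^{\mathfrak{S}_A})$, $(\mathfrak{S}_B,\mathfrak{E}_B,\epsilon^{\mathfrak{S}_B})$ are States/Effects Chu spaces (down-complete Inf semi-lattices of states and of effects, evaluation maps $\epsilon$ preserving arbitrary infima in each variable). For $U\subseteq\mathfrak{S}_A\times\mathfrak{S}_B$, $\Omega(U)$ is the map $\mathfrak{E}_A\times\mathfrak{E}_B\to\mathfrak{B}$, $(\mathfrak{l}_A,\mathfrak{l}_B)\mapsto\bigwedge_{(\sigma_A,\sigma_B)\in U}\epsilon^{\mathfrak{S}_A}_{\mathfrak{l}_A}(\sigma_A)\bullet\epsilon^{\mathfrak{S}_B}_{\mathfrak{l}_B}(\sigma_B)$ (subsets giving the same map are identified). The minimal tensor product $\widetilde{S}_{AB}$ is the set of all such maps $\Omega(U)$, ordered pointwise (it is the sub Inf semi-lattice of the maximal tensor product generated by the pure tensors). *)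

theory Defs
  imports Main
begin

datatype B3 = Y | N | Bot

instantiation B3 :: order
begin
definition less_eq_B3 :: "B3 \<Rightarrow> B3 \<Rightarrow> bool" where
  "less_eq_B3 x y \<longleftrightarrow> x = y \<or> x = Bot"
definition less_B3 :: "B3 \<Rightarrow> B3 \<Rightarrow> bool" where
  "less_B3 x y \<longleftrightarrow> x \<le> y \<and> x \<noteq> y"
instance by standard (auto simp: less_eq_B3_def less_B3_def)
end

definition Bmeet :: "B3 set \<Rightarrow> B3" where
  "Bmeet A = (if A \<noteq> {} \<and> A \<subseteq> {Y} then Y
              else if A \<noteq> {} \<and> A \<subseteq> {N} then N else Bot)"

fun Bprod :: "B3 \<Rightarrow> B3 \<Rightarrow> B3" where
  "Bprod x Y = x"
| "Bprod Y x = x"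
| "Bprod x N = N"
| "Bprod N x = N"
| "Bprod Bot Bot = Bot"

definition is_glb :: "'a::order set \<Rightarrow> 'a set \<Rightarrow> 'a \<Rightarrow> bool" where
  "is_glb C A x \<longleftrightarrow> x \<in> C \<and> (\<forall>a\<in>A. x \<le> a) \<and> (\<forall>y\<in>C. (\<forall>a\<in>A. y \<le> a) \<longrightarrow> y \<le> x)"

definition down_complete :: "'a::order set \<Rightarrow> bool" where
  "down_complete C \<longleftrightarrow> (\<forall>A. A \<subseteq> C \<and> A \<noteq> {} \<longrightarrow> (\<exists>x. is_glb C A x))"

text \<open>States/Effects Chu space: states and effects (the whole types) are down-complete
  Inf semi-lattices, and the evaluation map preserves (nonempty) infima in each variable.\<close>
definition chu_space :: "('e::order \<Rightarrow> 's::order \<Rightarrow> B3) \<Rightarrow> bool" where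
  "chu_space eps \<longleftrightarrow> down_complete (UNIV :: 's set) \<and> down_complete (UNIV :: 'e set)
     \<and> (\<forall>l A s. A \<noteq> {} \<and> is_glb UNIV A s \<longrightarrow> eps l s = Bmeet (eps l ` A))
     \<and> (\<forall>s A l. A \<noteq> {} \<and> is_glb UNIV A l \<longrightarrow> eps l s = Bmeet ((\<lambda>l'. eps l' s) ` A))"

definition Omega :: "('ea \<Rightarrow> 'sa \<Rightarrow> B3) \<Rightarrow> ('eb \<Rightarrow> 'sb \<Rightarrow> B3) \<Rightarrow> ('sa \<times> 'sb) set
                      \<Rightarrow> ('ea \<times> 'eb \<Rightarrow> B3)" where
  "Omega epsA epsB U = (\<lambda>(lA, lB). Bmeet ((\<lambda>(sA, sB). Bprod (epsA lA sA) (epsB lB sB)) ` U))"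

text \<open>Minimal tensor product: all Omega(U), U nonempty; ordered pointwise (order on functions).\<close>
definition Smin :: "('ea \<Rightarrow> 'sa \<Rightarrow> B3) \<Rightarrow> ('eb \<Rightarrow> 'sb \<Rightarrow> B3) \<Rightarrow> ('ea \<times> 'eb \<Rightarrow> B3) set" where
  "Smin epsA epsB = {Omega epsA epsB U | U. U \<noteq> {}}"

end

theory Submission
  imports Defs
begin

lemma Bmeet_lb: "a \<in> A \<Longrightarrow> Bmeet A \<le> a"
  by (cases a) (auto simp: Bmeet_def less_eq_B3_def)

lemma Bmeet_gr: "A \<noteq> {} \<Longrightarrow> (\<And>a. a \<in> A \<Longrightarrow> y \<le> a) \<Longrightarrow> y \<le> Bmeet A"
  unfolding Bmeet_def less_eq_B3_def
  apply (cases y)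
  apply (auto simp: subset_iff)
  done

lemma glb_union:
  fixes epsA :: "'ea \<Rightarrow> 'sa \<Rightarrow> B3" and epsB :: "'eb \<Rightarrow> 'sb \<Rightarrow> B3"
    and U :: "'i \<Rightarrow> ('sa \<times> 'sb) set"
  assumes I: "I \<noteq> {}" and ne: "\<forall>i\<in>I. U i \<noteq> {}"
  shows "is_glb (Smin epsA epsB) ((\<lambda>i. Omega epsA epsB (U i)) ` I)
              (Omega epsA epsB (\<Union>i\<in>I. U i))"
  unfolding is_glb_def
proof (intro conjI ballI impI)
  show "Omega epsA epsB (\<Union>i\<in>I. U i) \<in> Smin epsA epsB"
    using I ne unfolding Smin_def by blast
next
  fix a assume "a \<in> (\<lambda>i. Omega epsA epsB (U i)) ` I"
  then obtain i where i: "i \<in> I" and a: "a = Omega epsA epsB (U i)" by blast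
  show "Omega epsA epsB (\<Union>i\<in>I. U i) \<le> a"
    unfolding a le_fun_def Omega_def
  proof (intro allI, clarsimp)
    fix lA lB
    show "Bmeet ((\<lambda>(sA, sB). Bprod (epsA lA sA) (epsB lB sB)) ` (\<Union>i\<in>I. U i))
       \<le> Bmeet ((\<lambda>(sA, sB). Bprod (epsA lA sA) (epsB lB sB)) ` U i)"
      apply (rule Bmeet_gr)
      using ne i apply blast
      apply (rule Bmeet_lb) using i by blast
  qed
next
  fix y assume "y \<in> Smin epsA epsB"
    and H: "\<forall>a\<in>(\<lambda>i. Omega epsA epsB (U i)) ` I. y \<le> a"
  show "y \<le> Omega epsA epsB (\<Union>i\<in>I. U i)"
    unfolding le_fun_def
  proof
    fix p :: "'ea \<times> 'eb"
    obtain lA lB where p: "p = (lA, lB)" by (cases p)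
    show "y p \<le> Omega epsA epsB (\<Union>i\<in>I. U i) p"
      unfolding p Omega_def
    proof (clarsimp, rule Bmeet_gr)
      show "(\<lambda>(sA, sB). Bprod (epsA lA sA) (epsB lB sB)) ` (\<Union>i\<in>I. U i) \<noteq> {}"
        using I ne by blast
    next
      fix a assume "a \<in> (\<lambda>(sA, sB). Bprod (epsA lA sA) (epsB lB sB)) ` (\<Union>i\<in>I. U i)"
      then obtain i s where i: "i \<in> I" "s \<in> U i"
        and a: "a = (\<lambda>(sA, sB). Bprod (epsA lA sA) (epsB lB sB)) s" by blast
      have "y (lA, lB) \<le> Omega epsA epsB (U i) (lA, lB)"
        using H i by (auto simp: le_fun_def)
      also have "\<dots> \<le> a" unfolding Omega_def a
        by (simp, rule Bmeet_lb, use i in blast)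
      finally show "y (lA, lB) \<le> a" .
    qed
  qed
qed

theorem mainTheorem4:
  fixes epsA :: "'ea::order \<Rightarrow> 'sa::order \<Rightarrow> B3"
    and epsB :: "'eb::order \<Rightarrow> 'sb::order \<Rightarrow> B3"
  assumes "chu_space epsA" and "chu_space epsB"
  shows "down_complete (Smin epsA epsB) \<and>
    (\<forall>(U :: 'i \<Rightarrow> ('sa \<times> 'sb) set) I. I \<noteq> {} \<and> (\<forall>i\<in>I. U i \<noteq> {}) \<longrightarrow>
       is_glb (Smin epsA epsB) ((\<lambda>i. Omega epsA epsB (U i)) ` I)
              (Omega epsA epsB (\<Union>i\<in>I. U i)))"
proof
  show "down_complete (Smin epsA epsB)"
    unfolding down_complete_def
  proof (intro allI impI)
    fix A assume A: "A \<subseteq> Smin epsA epsB \<and> A \<noteq> {}"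
    define V where "V f = (SOME U. U \<noteq> {} \<and> f = Omega epsA epsB U)" for f
    have V: "V f \<noteq> {} \<and> f = Omega epsA epsB (V f)" if "f \<in> A" for f
    proof -
      from that A obtain U where "U \<noteq> {} \<and> f = Omega epsA epsB U"
        unfolding Smin_def by blast
      then show ?thesis unfolding V_def by (rule someI)
    qed
    have V1: "V f \<noteq> {}" if "f \<in> A" for f
      using V[OF that] by (rule conjunct1)
    have V2: "Omega epsA epsB (V f) = f" if "f \<in> A" for f
      using V[OF that] by (metis conjunct2)
    have eq: "(\<lambda>f. Omega epsA epsB (V f)) ` A = A"
    proof
      show "(\<lambda>f. Omega epsA epsB (V f)) ` A \<subseteq> A"
      proof
        fix g assume "g \<in> (\<lambda>f. Omega epsA epsB (V f)) ` A"
        then obtain f where "f \<in> A" "g = Omega epsA epsB (V f)" by (rule imageE)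
        then show "g \<in> A" using V2 by simp
      qed
      show "A \<subseteq> (\<lambda>f. Omega epsA epsB (V f)) ` A"
      proof
        fix f assume f: "f \<in> A"
        have "Omega epsA epsB (V f) \<in> (\<lambda>f. Omega epsA epsB (V f)) ` A"
          using f by (rule imageI)
        then show "f \<in> (\<lambda>f. Omega epsA epsB (V f)) ` A" using V2[OF f] by simp
      qed
    qed
    have "is_glb (Smin epsA epsB) ((\<lambda>f. Omega epsA epsB (V f)) ` A)
              (Omega epsA epsB (\<Union>f\<in>A. V f))"
    proof (rule glb_union)
      show "A \<noteq> {}" using A by (rule conjunct2)
      show "\<forall>f\<in>A. V f \<noteq> {}" using V1 by blast
    qed
    then have G: "is_glb (Smin epsA epsB) A (Omega epsA epsB (\<Union>f\<in>A. V f))"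
      by (simp only: eq)
    show "\<exists>x. is_glb (Smin epsA epsB) A x"
      by (rule exI[where x="Omega epsA epsB (\<Union>f\<in>A. V f)"], rule G)
  qed
next
  show "\<forall>(U :: 'i \<Rightarrow> ('sa \<times> 'sb) set) I. I \<noteq> {} \<and> (\<forall>i\<in>I. U i \<noteq> {}) \<longrightarrow>
       is_glb (Smin epsA epsB) ((\<lambda>i. Omega epsA epsB (U i)) ` I)
              (Omega epsA epsB (\<Union>i\<in>I. U i))"
  proof (intro allI impI)
    fix U :: "'i \<Rightarrow> ('sa \<times> 'sb) set" and I
    assume "I \<noteq> {} \<and> (\<forall>i\<in>I. U i \<noteq> {})"
    then show "is_glb (Smin epsA epsB) ((\<lambda>i. Omega epsA epsB (U i)) ` I)
              (Omega epsA epsB (\<Union>i\<in>I. U i))"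
      by (intro glb_union) auto
  qed
qed

end
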